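(* Let $m\ge3$ be odd and suppose $B,D\subseteq\mathbb{Z}_m$ are $2$-$\{m;k,r;k+r-\frac{m+1}{2}\}$ ASDS with $0\notin B$ and $m-1\notin D$. Then \[ \frac{(m-1)^2}{2}\le (k+r)m-(k^2+r^2)\le\frac{m^2-1}{2}. \]
   Context: For $B,D\subseteq\mathbb{Z}_m$ and $a\in\mathbb{Z}_m\setminus\{0\}$, let $N_{B,D}(a)=|\{(x,x')\in B\times B: x-x'\equiv a\}|+|\{(y,y')\in D\times D: y-y'\equiv a\}|$. For an integer $\mu$, $B$ and $D$ are $2$-$\{m;k,r;\mu\}$ ASDS if $|B|=k$, $|D|=r$ and $N_{B,D}(a)\in\{\mu,\mu+1\}$ for every $a\in\mathbb{Z}_m\setminus\{0\}$. *)

theory Defs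
  imports Main
begin

text \<open>Z_m is modelled as the integers {0..<m}; a subset of Z_m is a set B \<subseteq> {0..<m}.
  N_{B,D}(a) counts ordered pairs with difference congruent to a modulo m.\<close>

definition N_BD :: "int \<Rightarrow> int set \<Rightarrow> int set \<Rightarrow> int \<Rightarrow> nat" where
  "N_BD m B D a =
     card {(x, x'). x \<in> B \<and> x' \<in> B \<and> (x - x') mod m = a mod m}
   + card {(y, y'). y \<in> D \<and> y' \<in> D \<and> (y - y') mod m = a mod m}"

definition is_ASDS2 :: "int \<Rightarrow> nat \<Rightarrow> nat \<Rightarrow> int \<Rightarrow> int set \<Rightarrow> int set \<Rightarrow> bool" where
  "is_ASDS2 m k r \<mu> B D \<longleftrightarrow>
     B \<subseteq> {0..<m} \<and> D \<subseteq> {0..<m} \<and> card B = k \<and> card D = r \<and>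
     (\<forall>a \<in> {1..<m}. int (N_BD m B D a) = \<mu> \<or> int (N_BD m B D a) = \<mu> + 1)"

end

theory Submission
  imports Defs
begin

lemma fib_card:
  assumes "finite A" "f ` A \<subseteq> T" "finite T"
  shows "card A = (\<Sum>a\<in>T. card {p\<in>A. f p = a})"
proof -
  have "A = (\<Union>a\<in>T. {p\<in>A. f p = a})" using assms(2) by auto
  hence "card A = card (\<Union>a\<in>T. {p\<in>A. f p = a})" by simp
  also have "\<dots> = (\<Sum>a\<in>T. card {p\<in>A. f p = a})"
    by (rule card_UN_disjoint) (use assms in auto)
  finally show ?thesis .
qed

lemma pair_sum:
  fixes m :: int and B :: "int set"
  assumes "B \<subseteq> {0..<m}"
  shows "(\<Sum>a\<in>{1..<m}. card {(x, x'). x \<in> B \<and> x' \<in> B \<and> (x - x') mod m = a mod m})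
         = card B * card B - card B"
proof -
  have fB: "finite B" using assms finite_subset by blast
  define A where "A = {p\<in>B \<times> B. fst p \<noteq> snd p}"
  have fA: "finite A" unfolding A_def using fB by auto
  have img: "(\<lambda>p. (fst p - snd p) mod m) ` A \<subseteq> {1..<m}"
  proof
    fix y assume "y \<in> (\<lambda>p. (fst p - snd p) mod m) ` A"
    then obtain x x' where xx: "x \<in> B" "x' \<in> B" "x \<noteq> x'" "y = (x - x') mod m"
      unfolding A_def by auto
    have m0: "m > 0" using xx assms by auto
    have "\<not> m dvd (x - x')"
    proof
      assume "m dvd (x - x')"
      then obtain c where c: "x - x' = m * c" by auto
      have "\<bar>x - x'\<bar> < m" proof -
        have "0 \<le> x" "x < m" "0 \<le> x'" "x' < m" using xx(1,2) assms by auto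
        thus ?thesis by linarith
      qed
      hence "c = 0" using c m0
      proof -
        have "\<bar>m * c\<bar> = m * \<bar>c\<bar>" using m0 by (simp add: abs_mult)
        hence "m * \<bar>c\<bar> < m * 1" using c \<open>\<bar>x - x'\<bar> < m\<close> by simp
        hence "\<bar>c\<bar> < 1" using m0 mult_less_cancel_left_pos by blast
        thus ?thesis by simp
      qed
      thus False using c xx by simp
    qed
    hence "y \<noteq> 0" using xx by (simp add: dvd_eq_mod_eq_0)
    moreover have "0 \<le> y" "y < m" using xx m0 by auto
    ultimately show "y \<in> {1..<m}" by auto
  qed
  have "card A = (\<Sum>a\<in>{1..<m}. card {p\<in>A. (fst p - snd p) mod m = a})"
    by (rule fib_card[OF fA img]) simp
  also have "\<dots> = (\<Sum>a\<in>{1..<m}. card {(x, x'). x \<in> B \<and> x' \<in> B \<and> (x - x') mod m = a mod m})"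
  proof (rule sum.cong[OF refl])
    fix a assume a: "a \<in> {1..<m}"
    hence am: "a mod m = a" by auto
    show "card {p\<in>A. (fst p - snd p) mod m = a} =
      card {(x, x'). x \<in> B \<and> x' \<in> B \<and> (x - x') mod m = a mod m}"
      apply (rule arg_cong[where f=card])
      using a am unfolding A_def by auto
  qed
  finally have 1: "card A = (\<Sum>a\<in>{1..<m}. card {(x, x'). x \<in> B \<and> x' \<in> B \<and> (x - x') mod m = a mod m})" .
  have "A = B \<times> B - (\<lambda>x. (x, x)) ` B" unfolding A_def by auto
  hence "card A = card (B \<times> B) - card ((\<lambda>x. (x, x)) ` B)"
    using fB by (simp add: card_Diff_subset finite_cartesian_product image_subset_iff)
  also have "card ((\<lambda>x. (x, x)) ` B) = card B" by (rule card_image) (auto simp: inj_on_def)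
  finally have "card A = card B * card B - card B" by (simp add: card_cartesian_product)
  thus ?thesis using 1 by simp
qed

theorem corollary5:
  fixes m :: int and k r :: nat and B D :: "int set"
  assumes "m \<ge> 3" and "odd m"
    and "is_ASDS2 m k r (int k + int r - (m + 1) div 2) B D"
    and "0 \<notin> B" and "m - 1 \<notin> D"
  shows "(m - 1)^2 \<le> 2 * ((int k + int r) * m - (int k ^ 2 + int r ^ 2))
    \<and> 2 * ((int k + int r) * m - (int k ^ 2 + int r ^ 2)) \<le> m^2 - 1"
proof -
  define \<mu> where "\<mu> = int k + int r - (m + 1) div 2"
  have A: "B \<subseteq> {0..<m}" "D \<subseteq> {0..<m}" "card B = k" "card D = r"
    and N: "\<forall>a \<in> {1..<m}. int (N_BD m B D a) = \<mu> \<or> int (N_BD m B D a) = \<mu> + 1"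
    using assms(3) unfolding is_ASDS2_def \<mu>_def by auto
  have S: "(\<Sum>a\<in>{1..<m}. N_BD m B D a) = (k * k - k) + (r * r - r)"
    unfolding N_BD_def sum.distrib using pair_sum[OF A(1)] pair_sum[OF A(2)] A(3,4) by simp
  have Si: "(\<Sum>a\<in>{1..<m}. int (N_BD m B D a)) = int k * int k - int k + (int r * int r - int r)"
  proof -
    have "k \<le> k * k" "r \<le> r * r" by (simp_all add: le_square)
    moreover have "int ((k * k - k) + (r * r - r)) = int k * int k - int k + (int r * int r - int r)"
      using calculation by (simp only: of_nat_add of_nat_diff of_nat_mult)
    ultimately show ?thesis using S by (metis of_nat_sum)
  qed
  have cm: "card {1..<m} = nat (m - 1)" by simp
  have lo: "(\<Sum>a\<in>{1..<m}. \<mu>) \<le> (\<Sum>a\<in>{1..<m}. int (N_BD m B D a))"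
    by (rule sum_mono) (use N in force)
  have hi: "(\<Sum>a\<in>{1..<m}. int (N_BD m B D a)) \<le> (\<Sum>a\<in>{1..<m}. \<mu> + 1)"
    by (rule sum_mono) (use N in force)
  have m1: "int (nat (m - 1)) = m - 1" using assms(1) by simp
  have lo': "(m - 1) * \<mu> \<le> int k * int k - int k + (int r * int r - int r)"
    using lo Si cm m1 by simp
  have hi': "int k * int k - int k + (int r * int r - int r) \<le> (m - 1) * (\<mu> + 1)"
    using hi Si cm m1 by simp
  obtain t where t: "m = 2 * t + 1" using assms(2) oddE by blast
  have \<mu>t: "\<mu> = int k + int r - (t + 1)" unfolding \<mu>_def t by simp
  show ?thesis using lo' hi' unfolding \<mu>t t by (simp add: power2_eq_square algebra_simps)
qed

end
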